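(* Let $p$ be an admissible linear order on $\mathcal A$ and $I\subset\mathcal A$ an interval with respect to $p$. Let $\mathcal A^*$ be the amalgamation of $\mathcal A$ obtained by shrinking $I$ to a single new letter $z$, declared to belong to $L_e$ and placed in the position of $I$ in the order (all other letters and their order unchanged), and for $w\in\mathcal A^n$ let $w^*\in(\mathcal A^* )^n$ be obtained by replacing every letter of $w$ lying in $I$ by $z$. Then for every $w\in\mathcal A^n$ and every $k\ge1$, $$\sum_{i=1}^k\lambda_i(\phi_p(w))\le\sum_{i=1}^k\lambda_i(\phi_p^*(w^* )),$$ where $\phi_p^*$ is the generalised RSK shape map for the alphabet $\mathcal A^*$ with the induced order and $\lambda_i(\cdot)$ denotes the length of the $i$-th row. In particular, if $\mathcal P^*$ denotes the parameters of $\mathcal A^*$ (with $z$ having mass $\mu_1(I)$), then $\sum_{i=1}^k\lambda_i^{\mathcal P}(n)\le\sum_{i=1}^k\lambda_i^{\mathcal P^*}(n)$ pointwise on $(\mathcal A^n,\mu_n)$.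
   Context: Alphabet: $\mathcal A=L_e\sqcup L_o\sqcup G$ where $L_e=\{x_1,x_2,\dots\}$, $L_o=\{y_1,y_2,\dots\}$ are discrete and $G$ is identified with an interval of $\mathbb R$; $\mu_1$, $\mu_n=\mu_1^{\otimes n}$ are the measures with $\mu_1(\{x_i\})=\alpha_i$, $\mu_1(\{y_j\})=\beta_j$, and $\gamma$ times normalized Lebesgue measure on $G$, for Thoma parameters $\mathcal P$. An admissible order is a linear order $p$ on $\mathcal A$ for which $G$ is an interval (if $a_1<a<a_2$ with $a_1,a_2\in G$ then $a\in G$) and whose restriction to $G$ is the usual order of reals or its reverse. A subset $I\subset\mathcal A$ is an interval w.r.t. $p$ if $a_1,a_2\in I$, $a_1<a<a_2$ imply $a\in I$. Generalised RSK (row insertion) w.r.t. $p$: an $\mathcal A_p$-tableau is a Young diagram filled with letters of $\mathcal A$. To insert a letter $x$ into a tableau $T$: in the first row, if $x\in L_e$ find the leftmost entry strictly greater than $x$; if $x\in L_o\cup G$ find the leftmost entry greater than or equal to $x$; if there is none, append $x$ at the end of the row and stop; otherwise $x$ replaces that entry and the replaced entry is inserted into the second row by the same rule, and so on (an entry bumped out of the last row forms a new row). For $w=z_1\cdots z_n$, $R(w)$ is obtained by inserting $z_1,z_2,\dots,z_n$ successively into the empty tableau, and $\phi_p(w)\in\mathbb Y_n$ is the shape of $R(w)$. $\lambda_i^{\mathcal P}(n)(w):=\lambda_i(\phi_p(w))$. *)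

theory Defs
  imports Complex_Main
begin

(* Letters: L_e = {X i}, L_o = {Y j}, G = {Gl r | r in Gset} with Gset an interval of reals *)
datatype letter = X nat | Y nat | Gl real

fun is_X :: "letter \<Rightarrow> bool" where
  "is_X (X _) = True"
| "is_X _ = False"

definition real_interval :: "real set \<Rightarrow> bool" where
  "real_interval S \<longleftrightarrow> (\<forall>a b c. a \<in> S \<longrightarrow> c \<in> S \<longrightarrow> a \<le> b \<longrightarrow> b \<le> c \<longrightarrow> b \<in> S)"

definition alph :: "real set \<Rightarrow> letter set" where
  "alph Gset = range X \<union> range Y \<union> Gl ` Gset"

definition admissible :: "real set \<Rightarrow> letter rel \<Rightarrow> bool" where
  "admissible Gset p \<longleftrightarrow>
     linear_order_on (alph Gset) p \<and>
     (\<forall>a1 a a2. a1 \<in> Gl ` Gset \<longrightarrow> a2 \<in> Gl ` Gset \<longrightarrow> a \<in> alph Gset \<longrightarrow>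
        (a1, a) \<in> p \<longrightarrow> (a, a2) \<in> p \<longrightarrow> a \<in> Gl ` Gset) \<and>
     ((\<forall>r\<in>Gset. \<forall>s\<in>Gset. (Gl r, Gl s) \<in> p \<longleftrightarrow> r \<le> s) \<or>
      (\<forall>r\<in>Gset. \<forall>s\<in>Gset. (Gl r, Gl s) \<in> p \<longleftrightarrow> s \<le> r))"

definition interval_wrt :: "'a set \<Rightarrow> 'a rel \<Rightarrow> 'a set \<Rightarrow> bool" where
  "interval_wrt A p I \<longleftrightarrow> I \<subseteq> A \<and>
     (\<forall>a1 a a2. a1 \<in> I \<longrightarrow> a2 \<in> I \<longrightarrow> a \<in> A \<longrightarrow> (a1, a) \<in> p \<longrightarrow> (a, a2) \<in> p \<longrightarrow> a \<in> I)"

(* Generalised RSK. strict x: x belongs to L_e (bumps the leftmost strictly greater entry);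
   otherwise x bumps the leftmost entry greater than or equal to x. *)
definition bump_of :: "'a rel \<Rightarrow> ('a \<Rightarrow> bool) \<Rightarrow> 'a \<Rightarrow> 'a \<Rightarrow> bool" where
  "bump_of p strict x e = (if strict x then (x, e) \<in> p \<and> x \<noteq> e else (x, e) \<in> p)"

fun row_ins :: "('a \<Rightarrow> 'a \<Rightarrow> bool) \<Rightarrow> 'a \<Rightarrow> 'a list \<Rightarrow> 'a option \<times> 'a list" where
  "row_ins bump x [] = (None, [x])"
| "row_ins bump x (e # es) =
     (if bump x e then (Some e, x # es)
      else (let (r, es') = row_ins bump x es in (r, e # es')))"

(* tableau = list of rows, first row first *)
fun tab_ins :: "('a \<Rightarrow> 'a \<Rightarrow> bool) \<Rightarrow> 'a \<Rightarrow> 'a list list \<Rightarrow> 'a list list" where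
  "tab_ins bump x [] = [[x]]"
| "tab_ins bump x (r # rs) =
     (case row_ins bump x r of
        (None, r') \<Rightarrow> r' # rs
      | (Some y, r') \<Rightarrow> r' # tab_ins bump y rs)"

definition rsk :: "('a \<Rightarrow> 'a \<Rightarrow> bool) \<Rightarrow> 'a list \<Rightarrow> 'a list list" where
  "rsk bump w = fold (tab_ins bump) w []"

definition phi :: "'a rel \<Rightarrow> ('a \<Rightarrow> bool) \<Rightarrow> 'a list \<Rightarrow> nat list" where
  "phi p strict w = map length (rsk (bump_of p strict) w)"

(* lambda_i, 1-indexed, 0 beyond the number of rows *)
definition lam :: "nat list \<Rightarrow> nat \<Rightarrow> nat" where
  "lam sh i = (if 1 \<le> i \<and> i \<le> length sh then sh ! (i - 1) else 0)"

(* Amalgamated alphabet: None is the new letter z, Some a for a in A - I *)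
definition amalg_alph :: "letter set \<Rightarrow> letter set \<Rightarrow> letter option set" where
  "amalg_alph A I = Some ` (A - I) \<union> {None}"

definition amalg_order :: "letter set \<Rightarrow> letter rel \<Rightarrow> letter set \<Rightarrow> letter option rel" where
  "amalg_order A p I =
     {(Some a, Some b) | a b. a \<in> A - I \<and> b \<in> A - I \<and> (a, b) \<in> p}
   \<union> {(None, None)}
   \<union> {(None, Some b) | b. b \<in> A - I \<and> (\<exists>a\<in>I. (a, b) \<in> p)}
   \<union> {(Some a, None) | a. a \<in> A - I \<and> (\<exists>b\<in>I. (a, b) \<in> p)}"

(* z is declared to belong to L_e *)
fun amalg_strict :: "letter option \<Rightarrow> bool" where
  "amalg_strict None = True"
| "amalg_strict (Some a) = is_X a"

definition amalg_word :: "letter set \<Rightarrow> letter list \<Rightarrow> letter option list" where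
  "amalg_word I w = map (\<lambda>a. if a \<in> I then None else Some a) w"

end

theory Submission
  imports Defs
begin


definition ltS :: "(nat \<Rightarrow> bool) \<Rightarrow> nat \<Rightarrow> nat \<Rightarrow> bool" where
  "ltS s x y \<longleftrightarrow> x < y \<or> (x = y \<and> \<not> s x)"
definition leS :: "(nat \<Rightarrow> bool) \<Rightarrow> nat \<Rightarrow> nat \<Rightarrow> bool" where
  "leS s x y \<longleftrightarrow> x < y \<or> (x = y \<and> s x)"

lemma not_ltS: "(\<not> ltS s x y) = leS s y x" unfolding ltS_def leS_def by auto
lemma not_leS: "(\<not> leS s x y) = ltS s y x" unfolding ltS_def leS_def by auto
lemma lt_lt: "ltS s a b \<Longrightarrow> ltS s b c \<Longrightarrow> ltS s a c" unfolding ltS_def by auto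
lemma le_le: "leS s a b \<Longrightarrow> leS s b c \<Longrightarrow> leS s a c" unfolding leS_def by auto
lemma lt_le_less: "ltS s a b \<Longrightarrow> leS s b c \<Longrightarrow> a < c" unfolding ltS_def leS_def by auto
lemma le_lt_less: "leS s a b \<Longrightarrow> ltS s b c \<Longrightarrow> a < c" unfolding ltS_def leS_def by auto
lemma less_lt: "a < b \<Longrightarrow> ltS s a b" unfolding ltS_def by auto
lemma less_le: "a < b \<Longrightarrow> leS s a b" unfolding leS_def by auto
lemma lt_le_lt: "ltS s a b \<Longrightarrow> leS s b c \<Longrightarrow> ltS s a c" unfolding ltS_def leS_def by auto
lemma lt_le_le: "ltS s a b \<Longrightarrow> leS s b c \<Longrightarrow> leS s a c" unfolding ltS_def leS_def by auto
lemma le_lt_lt: "leS s a b \<Longrightarrow> ltS s b c \<Longrightarrow> ltS s a c" unfolding ltS_def leS_def by auto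
lemma le_lt_le: "leS s a b \<Longrightarrow> ltS s b c \<Longrightarrow> leS s a c" unfolding ltS_def leS_def by auto

definition Rc :: "(nat \<Rightarrow> bool) \<Rightarrow> nat \<times> nat option \<Rightarrow> nat \<times> nat option \<Rightarrow> bool" where
  "Rc s p q \<longleftrightarrow> (snd p = snd q \<and> snd p \<noteq> None \<longrightarrow> leS s (fst p) (fst q))"

definition valid :: "(nat \<Rightarrow> bool) \<Rightarrow> nat \<Rightarrow> (nat \<times> nat option) list \<Rightarrow> bool" where
  "valid s k ps \<longleftrightarrow> (\<forall>p\<in>set ps. \<forall>m. snd p = Some m \<longrightarrow> m < k) \<and> sorted_wrt (Rc s) ps"

definition cnt :: "(nat \<times> nat option) list \<Rightarrow> nat" where
  "cnt ps = length (filter (\<lambda>p. snd p \<noteq> None) ps)"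

definition D :: "(nat \<Rightarrow> bool) \<Rightarrow> nat list \<Rightarrow> nat list \<Rightarrow> bool" where
  "D s u u' \<longleftrightarrow> (\<forall>a b k ps. map fst ps = a @ u @ b \<longrightarrow> valid s k ps \<longrightarrow>
      (\<exists>ps'. map fst ps' = a @ u' @ b \<and> valid s k ps' \<and> cnt ps' = cnt ps))"

definition K :: "(nat \<Rightarrow> bool) \<Rightarrow> nat list \<Rightarrow> nat list \<Rightarrow> bool" where
  "K s u u' \<longleftrightarrow> D s u u' \<and> D s u' u"

lemma D_refl: "D s u u" unfolding D_def by blast
lemma D_trans: "D s u v \<Longrightarrow> D s v w \<Longrightarrow> D s u w" unfolding D_def by metis
lemma D_ctx: "D s u v \<Longrightarrow> D s (c @ u @ d) (c @ v @ d)"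
  unfolding D_def by (metis append.assoc)
lemma K_refl: "K s u u" by (simp add: K_def D_refl)
lemma K_trans: "K s u v \<Longrightarrow> K s v w \<Longrightarrow> K s u w" unfolding K_def using D_trans by blast
lemma K_ctx: "K s u v \<Longrightarrow> K s (c @ u @ d) (c @ v @ d)" unfolding K_def using D_ctx by blast

lemma cnt_append[simp]: "cnt (xs @ ys) = cnt xs + cnt ys" by (simp add: cnt_def)
lemma cnt_Cons[simp]: "cnt (p # ys) = (if snd p = None then 0 else 1) + cnt ys" by (simp add: cnt_def)
lemma cnt_Nil[simp]: "cnt [] = 0" by (simp add: cnt_def)

lemma split3:
  assumes "map fst ps = a @ [x,y,z] @ b"
  shows "\<exists>pa c1 c2 c3 pb. ps = pa @ [(x,c1),(y,c2),(z,c3)] @ pb \<and> map fst pa = a \<and> map fst pb = b"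
proof -
  from assms obtain pa r where "ps = pa @ r" "map fst pa = a" "map fst r = [x,y,z] @ b"
    by (auto simp: map_eq_append_conv)
  moreover from \<open>map fst r = [x,y,z] @ b\<close> obtain c1 c2 c3 pb where "r = [(x,c1),(y,c2),(z,c3)] @ pb" "map fst pb = b"
    by (auto simp: map_eq_Cons_conv)
  ultimately show ?thesis by blast
qed




definition sw :: "nat \<Rightarrow> nat \<Rightarrow> nat option \<Rightarrow> nat option" where
  "sw m m' c = (if c = Some m then Some m' else if c = Some m' then Some m else c)"

lemma cnt_sw: "cnt (map (apsnd (sw m m')) ps) = cnt ps"
  by (induction ps) (auto simp: sw_def)

lemma map_fst_sw[simp]: "map fst (map (apsnd (sw m m')) ps) = map fst ps"
  by (induction ps) auto

lemma valid_sw: assumes "valid s k ps" "m < k" "m' < k" shows "valid s k (map (apsnd (sw m m')) ps)"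
proof -
  have e: "\<And>c d. (sw m m' c = sw m m' d) = (c = d)" "\<And>c. (sw m m' c = None) = (c = None)"
    by (auto simp: sw_def)
  have "\<And>p q. Rc s (apsnd (sw m m') p) (apsnd (sw m m') q) = Rc s p q"
    by (simp add: Rc_def e)
  moreover have "\<And>c m''. sw m m' c = Some m'' \<Longrightarrow> m'' < k \<or> c = Some m'' " 
    using \<open>m < k\<close> \<open>m' < k\<close> by (auto simp: sw_def split: if_splits)
  ultimately show ?thesis using assms unfolding valid_def sorted_wrt_map
    by (auto simp: sw_def split: if_splits)
qed

lemma sorted_wrt_swap:
  "sorted_wrt R (xs @ [p,q] @ ys) \<Longrightarrow> R q p \<Longrightarrow> sorted_wrt R (xs @ [q,p] @ ys)"
  by (simp add: sorted_wrt_append)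

lemma DA1:
  assumes "ltS s x y" "leS s y z"
  shows "D s [y,z,x] [y,x,z]"
  unfolding D_def
proof (intro allI impI)
  fix a b k ps assume m: "map fst ps = a @ [y,z,x] @ b" and v: "valid s k ps"
  from split3[OF m] obtain pa c1 c2 c3 pb where ps: "ps = pa @ [(y,c1),(z,c2),(x,c3)] @ pb"
    "map fst pa = a" "map fst pb = b" by blast
  have "\<not> leS s z x" using assms by (auto simp: leS_def ltS_def)
  then have r: "Rc s (x,c3) (z,c2)" using v ps(1) by (auto simp: valid_def sorted_wrt_append Rc_def)
  have "sorted_wrt (Rc s) ((pa @ [(y,c1)]) @ [(z,c2),(x,c3)] @ pb)" using v ps(1) by (simp add: valid_def)
  from sorted_wrt_swap[OF this r] have "sorted_wrt (Rc s) (pa @ [(y,c1),(x,c3),(z,c2)] @ pb)" by simp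
  then show "\<exists>ps'. map fst ps' = a @ [y,x,z] @ b \<and> valid s k ps' \<and> cnt ps' = cnt ps"
    using v ps
    by (intro exI[of _ "pa @ [(y,c1),(x,c3),(z,c2)] @ pb"]) (auto simp: valid_def)
qed

lemma sw3: "sorted_wrt R (pa @ [q1,q2,q3] @ pb) \<longleftrightarrow> sorted_wrt R pa \<and> sorted_wrt R pb \<and>
   R q1 q2 \<and> R q1 q3 \<and> R q2 q3 \<and> (\<forall>p\<in>set pa. R p q1 \<and> R p q2 \<and> R p q3 \<and> (\<forall>q\<in>set pb. R p q)) \<and>
   (\<forall>q\<in>set pb. R q1 q \<and> R q2 q \<and> R q3 q)"
  by (auto simp: sorted_wrt_append)

lemma valid3: "valid s k (pa @ [q1,q2,q3] @ pb) \<longleftrightarrow> (\<forall>p\<in>set pa \<union> set pb \<union> {q1,q2,q3}. \<forall>m. snd p = Some m \<longrightarrow> m < k) \<and>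
   sorted_wrt (Rc s) (pa @ [q1,q2,q3] @ pb)"
  unfolding valid_def by auto

lemma DA2:
  assumes xy: "ltS s x y" and yz: "leS s y z"
  shows "D s [y,x,z] [y,z,x]"
  unfolding D_def
proof (intro allI impI)
  fix a b k ps assume m: "map fst ps = a @ [y,x,z] @ b" and v: "valid s k ps"
  from split3[OF m] obtain pa c1 c2 c3 pb where ps: "ps = pa @ [(y,c1),(x,c2),(z,c3)] @ pb"
    "map fst pa = a" "map fst pb = b" by blast
  have vv: "valid s k (pa @ [(y,c1),(x,c2),(z,c3)] @ pb)" using v ps(1) by simp
  note V = vv[unfolded valid3 sw3]
  show "\<exists>ps'. map fst ps' = a @ [y,z,x] @ b \<and> valid s k ps' \<and> cnt ps' = cnt ps"
  proof (cases "c2 = c3 \<and> c2 \<noteq> None")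
    case False
    then have r: "Rc s (z,c3) (x,c2)" by (auto simp: Rc_def)
    have "sorted_wrt (Rc s) ((pa @ [(y,c1)]) @ [(x,c2),(z,c3)] @ pb)" using v ps(1) by (simp add: valid_def)
    from sorted_wrt_swap[OF this r] have "sorted_wrt (Rc s) (pa @ [(y,c1),(z,c3),(x,c2)] @ pb)" by simp
    then show ?thesis
      using v ps
      by (intro exI[of _ "pa @ [(y,c1),(z,c3),(x,c2)] @ pb"]) (auto simp: valid_def)
  next
    case True
    then obtain mm where c2: "c2 = Some mm" and c3: "c3 = Some mm" by auto
    have nyx: "\<not> leS s y x" using xy by (simp add: not_leS)
    have c1: "c1 \<noteq> Some mm" using V c2 nyx by (auto simp: Rc_def)
    have mk: "mm < k" using V c2 by auto
    have paM: "\<forall>p\<in>set pa. snd p = Some mm \<longrightarrow> leS s (fst p) x \<and> leS s (fst p) z"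
      using V c2 c3 by (auto simp: Rc_def)
    have pbM: "\<forall>q\<in>set pb. snd q = Some mm \<longrightarrow> leS s x (fst q) \<and> leS s z (fst q)"
      using V c2 c3 by (auto simp: Rc_def)
    have pa1: "\<forall>p\<in>set pa. snd p = c1 \<and> c1 \<noteq> None \<longrightarrow> leS s (fst p) y"
      using V by (auto simp: Rc_def)
    have pb1: "\<forall>q\<in>set pb. snd q = c1 \<and> c1 \<noteq> None \<longrightarrow> leS s y (fst q)"
      using V by (auto simp: Rc_def)
    have papb: "\<forall>p\<in>set pa. \<forall>q\<in>set pb. Rc s p q" using V by auto
    show ?thesis
    proof (cases c1)
      case None
      let ?ps = "pa @ [(y,Some mm),(z,Some mm),(x,None)] @ pb"
      have "sorted_wrt (Rc s) ?ps"
        unfolding sw3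
      proof (intro conjI)
        show "sorted_wrt (Rc s) pa" "sorted_wrt (Rc s) pb" using V by auto
        show "Rc s (y, Some mm) (z, Some mm)" using yz by (simp add: Rc_def)
        show "Rc s (y, Some mm) (x, None)" "Rc s (z, Some mm) (x, None)" by (simp_all add: Rc_def)
        show "\<forall>p\<in>set pa. Rc s p (y, Some mm) \<and> Rc s p (z, Some mm) \<and> Rc s p (x, None) \<and> (\<forall>q\<in>set pb. Rc s p q)"
          using paM papb le_lt_le[OF _ xy] by (auto simp: Rc_def)
        show "\<forall>q\<in>set pb. Rc s (y, Some mm) q \<and> Rc s (z, Some mm) q \<and> Rc s (x, None) q"
          using pbM le_le[OF yz] by (auto simp: Rc_def)
      qed
      moreover have "\<forall>p\<in>set ?ps. \<forall>m. snd p = Some m \<longrightarrow> m < k" using V mk by auto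
      ultimately show ?thesis using ps None c2 c3
        by (intro exI[of _ ?ps]) (auto simp: valid_def)
    next
      case (Some mm')
      have mk': "mm' < k" using V Some by auto
      have ne: "mm' \<noteq> mm" using c1 Some by auto
      let ?pb = "map (apsnd (sw mm mm')) pb"
      let ?ps = "pa @ [(y,Some mm'),(z,Some mm'),(x,Some mm)] @ ?pb"
      have "valid s k pb" using V by (auto simp: valid_def)
      then have vpb: "valid s k ?pb" using valid_sw[of s k pb mm mm'] mk mk' by blast
      have "sorted_wrt (Rc s) ?ps"
        unfolding sw3
      proof (intro conjI)
        show "sorted_wrt (Rc s) pa" using V by auto
        show "sorted_wrt (Rc s) ?pb" using vpb by (simp add: valid_def)
        show "Rc s (y, Some mm') (z, Some mm')" using yz by (simp add: Rc_def)
        show "Rc s (y, Some mm') (x, Some mm)" "Rc s (z, Some mm') (x, Some mm)" using ne by (simp_all add: Rc_def)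
        show "\<forall>p\<in>set pa. Rc s p (y, Some mm') \<and> Rc s p (z, Some mm') \<and> Rc s p (x, Some mm) \<and> (\<forall>q\<in>set ?pb. Rc s p q)"
        proof
          fix p assume p: "p \<in> set pa"
          show "Rc s p (y, Some mm') \<and> Rc s p (z, Some mm') \<and> Rc s p (x, Some mm) \<and> (\<forall>q\<in>set ?pb. Rc s p q)"
          proof (intro conjI ballI)
            show "Rc s p (y, Some mm')" using pa1 p Some by (auto simp: Rc_def)
            show "Rc s p (z, Some mm')" using pa1 p Some le_le[OF _ yz] by (auto simp: Rc_def)
            show "Rc s p (x, Some mm)" using paM p by (auto simp: Rc_def)
            fix q assume "q \<in> set ?pb"
            then obtain q0 where q0: "q0 \<in> set pb" "q = apsnd (sw mm mm') q0" by auto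
            show "Rc s p q"
            proof (cases "snd q0 = Some mm \<or> snd q0 = Some mm'")
              case False
              then show ?thesis using papb p q0 by (auto simp: Rc_def sw_def)
            next
              case True
              then show ?thesis
              proof
                assume h: "snd q0 = Some mm"
                then have "leS s z (fst q0)" using pbM q0 by auto
                moreover have "snd p = Some mm' \<longrightarrow> leS s (fst p) y" using pa1 p Some by auto
                ultimately show ?thesis using q0 h ne yz by (auto simp: Rc_def sw_def intro: le_le)
              next
                assume h: "snd q0 = Some mm'"
                then have "leS s y (fst q0)" using pb1 q0 Some by auto
                moreover have "snd p = Some mm \<longrightarrow> leS s (fst p) x" using paM p by auto
                ultimately show ?thesis using q0 h ne xy
                  by (auto simp: Rc_def sw_def intro: le_le le_lt_le)
              qed
            qed
          qed
        qed
        show "\<forall>q\<in>set ?pb. Rc s (y, Some mm') q \<and> Rc s (z, Some mm') q \<and> Rc s (x, Some mm) q"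
        proof
          fix q assume "q \<in> set ?pb"
          then obtain q0 where q0: "q0 \<in> set pb" "q = apsnd (sw mm mm') q0" by auto
          show "Rc s (y, Some mm') q \<and> Rc s (z, Some mm') q \<and> Rc s (x, Some mm) q"
            using q0 pbM pb1 Some ne xy yz
            by (auto simp: Rc_def sw_def intro: le_le lt_le_le)
        qed
      qed
      moreover have "\<forall>p\<in>set ?ps. \<forall>m. snd p = Some m \<longrightarrow> m < k" using V vpb mk mk' by (auto simp: valid_def)
      moreover have "cnt ?ps = cnt ps" using ps Some c2 c3 by (simp add: cnt_sw)
      ultimately show ?thesis using ps
        by (intro exI[of _ ?ps]) (auto simp: valid_def)
    qed
  qed
qed




lemma DB1:
  assumes xy: "leS s x y" and yz: "ltS s y z"
  shows "D s [z,x,y] [x,z,y]"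
  unfolding D_def
proof (intro allI impI)
  fix a b k ps assume m: "map fst ps = a @ [z,x,y] @ b" and v: "valid s k ps"
  from split3[OF m] obtain pa c1 c2 c3 pb where ps: "ps = pa @ [(z,c1),(x,c2),(y,c3)] @ pb"
    "map fst pa = a" "map fst pb = b" by blast
  have "\<not> leS s z x" using le_lt_less[OF xy yz] by (auto simp: leS_def)
  then have r: "Rc s (x,c2) (z,c1)" using v ps(1) by (auto simp: valid_def sorted_wrt_append Rc_def)
  have "sorted_wrt (Rc s) (pa @ [(z,c1),(x,c2)] @ ((y,c3) # pb))" using v ps(1) by (simp add: valid_def)
  from sorted_wrt_swap[OF this r] have "sorted_wrt (Rc s) (pa @ [(x,c2),(z,c1),(y,c3)] @ pb)" by simp
  then show "\<exists>ps'. map fst ps' = a @ [x,z,y] @ b \<and> valid s k ps' \<and> cnt ps' = cnt ps"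
    using v ps
    by (intro exI[of _ "pa @ [(x,c2),(z,c1),(y,c3)] @ pb"]) (auto simp: valid_def)
qed

lemma DB2:
  assumes xy: "leS s x y" and yz: "ltS s y z"
  shows "D s [x,z,y] [z,x,y]"
  unfolding D_def
proof (intro allI impI)
  fix a b k ps assume m: "map fst ps = a @ [x,z,y] @ b" and v: "valid s k ps"
  from split3[OF m] obtain pa c1 c2 c3 pb where ps: "ps = pa @ [(x,c1),(z,c2),(y,c3)] @ pb"
    "map fst pa = a" "map fst pb = b" by blast
  have vv: "valid s k (pa @ [(x,c1),(z,c2),(y,c3)] @ pb)" using v ps(1) by simp
  note V = vv[unfolded valid3 sw3]
  show "\<exists>ps'. map fst ps' = a @ [z,x,y] @ b \<and> valid s k ps' \<and> cnt ps' = cnt ps"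
  proof (cases "c1 = c2 \<and> c1 \<noteq> None")
    case False
    then have r: "Rc s (z,c2) (x,c1)" by (auto simp: Rc_def)
    have "sorted_wrt (Rc s) (pa @ [(x,c1),(z,c2)] @ ((y,c3) # pb))" using v ps(1) by (simp add: valid_def)
    from sorted_wrt_swap[OF this r] have "sorted_wrt (Rc s) (pa @ [(z,c2),(x,c1),(y,c3)] @ pb)" by simp
    then show ?thesis
      using v ps
      by (intro exI[of _ "pa @ [(z,c2),(x,c1),(y,c3)] @ pb"]) (auto simp: valid_def)
  next
    case True
    then obtain mm where c1: "c1 = Some mm" and c2: "c2 = Some mm" by auto
    have nzy: "\<not> leS s z y" using yz by (simp add: not_leS)
    have c3: "c3 \<noteq> Some mm" using V c2 nzy by (auto simp: Rc_def)
    have mk: "mm < k" using V c2 by auto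
    have paM: "\<forall>p\<in>set pa. snd p = Some mm \<longrightarrow> leS s (fst p) x \<and> leS s (fst p) z"
      using V c1 c2 by (auto simp: Rc_def)
    have pbM: "\<forall>q\<in>set pb. snd q = Some mm \<longrightarrow> leS s x (fst q) \<and> leS s z (fst q)"
      using V c1 c2 by (auto simp: Rc_def)
    have pa3: "\<forall>p\<in>set pa. snd p = c3 \<and> c3 \<noteq> None \<longrightarrow> leS s (fst p) y"
      using V by (auto simp: Rc_def)
    have pb3: "\<forall>q\<in>set pb. snd q = c3 \<and> c3 \<noteq> None \<longrightarrow> leS s y (fst q)"
      using V by (auto simp: Rc_def)
    have papb: "\<forall>p\<in>set pa. \<forall>q\<in>set pb. Rc s p q" using V by auto
    show ?thesis
    proof (cases c3)
      case None
      let ?ps = "pa @ [(z,None),(x,Some mm),(y,Some mm)] @ pb"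
      have "sorted_wrt (Rc s) ?ps"
        unfolding sw3
      proof (intro conjI)
        show "sorted_wrt (Rc s) pa" "sorted_wrt (Rc s) pb" using V by auto
        show "Rc s (x, Some mm) (y, Some mm)" using xy by (simp add: Rc_def)
        show "Rc s (z, None) (x, Some mm)" "Rc s (z, None) (y, Some mm)" by (simp_all add: Rc_def)
        show "\<forall>p\<in>set pa. Rc s p (z, None) \<and> Rc s p (x, Some mm) \<and> Rc s p (y, Some mm) \<and> (\<forall>q\<in>set pb. Rc s p q)"
          using paM papb le_le[OF _ xy] by (auto simp: Rc_def)
        show "\<forall>q\<in>set pb. Rc s (z, None) q \<and> Rc s (x, Some mm) q \<and> Rc s (y, Some mm) q"
          using pbM lt_le_le[OF yz] by (auto simp: Rc_def)
      qed
      moreover have "\<forall>p\<in>set ?ps. \<forall>m. snd p = Some m \<longrightarrow> m < k" using V mk by auto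
      ultimately show ?thesis using ps None c1 c2
        by (intro exI[of _ ?ps]) (auto simp: valid_def)
    next
      case (Some mm')
      have mk': "mm' < k" using V Some by auto
      have ne: "mm' \<noteq> mm" using c3 Some by auto
      let ?pb = "map (apsnd (sw mm mm')) pb"
      let ?ps = "pa @ [(z,Some mm'),(x,Some mm),(y,Some mm)] @ ?pb"
      have "valid s k pb" using V by (auto simp: valid_def)
      then have vpb: "valid s k ?pb" using valid_sw[of s k pb mm mm'] mk mk' by blast
      have "sorted_wrt (Rc s) ?ps"
        unfolding sw3
      proof (intro conjI)
        show "sorted_wrt (Rc s) pa" using V by auto
        show "sorted_wrt (Rc s) ?pb" using vpb by (simp add: valid_def)
        show "Rc s (x, Some mm) (y, Some mm)" using xy by (simp add: Rc_def)
        show "Rc s (z, Some mm') (x, Some mm)" "Rc s (z, Some mm') (y, Some mm)" using ne by (simp_all add: Rc_def)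
        show "\<forall>p\<in>set pa. Rc s p (z, Some mm') \<and> Rc s p (x, Some mm) \<and> Rc s p (y, Some mm) \<and> (\<forall>q\<in>set ?pb. Rc s p q)"
        proof
          fix p assume p: "p \<in> set pa"
          show "Rc s p (z, Some mm') \<and> Rc s p (x, Some mm) \<and> Rc s p (y, Some mm) \<and> (\<forall>q\<in>set ?pb. Rc s p q)"
          proof (intro conjI ballI)
            show "Rc s p (z, Some mm')" using pa3 p Some le_lt_le[OF _ yz] by (auto simp: Rc_def)
            show "Rc s p (x, Some mm)" using paM p by (auto simp: Rc_def)
            show "Rc s p (y, Some mm)" using paM p le_le[OF _ xy] by (auto simp: Rc_def)
            fix q assume "q \<in> set ?pb"
            then obtain q0 where q0: "q0 \<in> set pb" "q = apsnd (sw mm mm') q0" by auto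
            show "Rc s p q"
            proof (cases "snd q0 = Some mm \<or> snd q0 = Some mm'")
              case False
              then show ?thesis using papb p q0 by (auto simp: Rc_def sw_def)
            next
              case True
              then show ?thesis
              proof
                assume h: "snd q0 = Some mm"
                then have "leS s z (fst q0)" using pbM q0 by auto
                moreover have "snd p = Some mm' \<longrightarrow> leS s (fst p) y" using pa3 p Some by auto
                ultimately show ?thesis using q0 h ne yz by (auto simp: Rc_def sw_def intro: le_le le_lt_le)
              next
                assume h: "snd q0 = Some mm'"
                then have "leS s y (fst q0)" using pb3 q0 Some by auto
                moreover have "snd p = Some mm \<longrightarrow> leS s (fst p) x" using paM p by auto
                ultimately show ?thesis using q0 h ne xy
                  by (auto simp: Rc_def sw_def intro: le_le)
              qed
            qed
          qed
        qed
        show "\<forall>q\<in>set ?pb. Rc s (z, Some mm') q \<and> Rc s (x, Some mm) q \<and> Rc s (y, Some mm) q"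
        proof
          fix q assume "q \<in> set ?pb"
          then obtain q0 where q0: "q0 \<in> set pb" "q = apsnd (sw mm mm') q0" by auto
          show "Rc s (z, Some mm') q \<and> Rc s (x, Some mm) q \<and> Rc s (y, Some mm) q"
            using q0 pbM pb3 Some ne xy yz
            by (auto simp: Rc_def sw_def intro: le_le)
        qed
      qed
      moreover have "\<forall>p\<in>set ?ps. \<forall>m. snd p = Some m \<longrightarrow> m < k" using V vpb mk mk' by (auto simp: valid_def)
      moreover have "cnt ?ps = cnt ps" using ps Some c1 c2 by (simp add: cnt_sw)
      ultimately show ?thesis using ps
        by (intro exI[of _ ?ps]) (auto simp: valid_def)
    qed
  qed
qed

lemma KA: "ltS s x y \<Longrightarrow> leS s y z \<Longrightarrow> K s [y,z,x] [y,x,z]"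
  unfolding K_def using DA1 DA2 by blast
lemma KB: "leS s x y \<Longrightarrow> ltS s y z \<Longrightarrow> K s [x,z,y] [z,x,y]"
  unfolding K_def using DB1 DB2 by blast




lemma K_sym: "K s u v \<Longrightarrow> K s v u" unfolding K_def by blast

lemma K_ctx1: "K s u v \<Longrightarrow> K s (c @ u) (c @ v)" using K_ctx[of s u v c "[]"] by simp
lemma K_ctx2: "K s u v \<Longrightarrow> K s (u @ d) (v @ d)" using K_ctx[of s u v "[]" d] by simp

lemma L1: "sorted_wrt (leS s) (c # b) \<Longrightarrow> ltS s x c \<Longrightarrow> K s (c # b @ [x]) (c # x # b)"
proof (induction b rule: rev_induct)
  case Nil then show ?case by (simp add: K_refl)
next
  case (snoc d b0)
  obtain pre e where pe: "c # b0 = pre @ [e]" by (metis rev_exhaust list.distinct(1))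
  have se: "e \<in> set (c # b0)" using pe by (metis in_set_conv_decomp)
  have s0: "sorted_wrt (leS s) (c # b0)" using snoc.prems(1) by (simp add: sorted_wrt_append)
  have xe: "ltS s x e"
  proof (cases "e = c")
    case True then show ?thesis using snoc.prems by simp
  next
    case False then have "leS s c e" using se snoc.prems(1) by (auto simp: sorted_wrt_append)
    then show ?thesis using lt_le_lt snoc.prems(2) by blast
  qed
  have ed: "leS s e d" using se snoc.prems(1) by (auto simp: sorted_wrt_append)
  have "K s (pre @ [e,d,x] @ []) (pre @ [e,x,d] @ [])" using KA[OF xe ed] K_ctx by blast
  then have 1: "K s (c # (b0 @ [d]) @ [x]) ((c # b0 @ [x]) @ [d])" using pe
    by (metis append.assoc append_Cons append_Nil append_Nil2)
  have "K s ((c # b0 @ [x]) @ [d]) ((c # x # b0) @ [d])" using K_ctx2 snoc.IH[OF s0 snoc.prems(2)] by blast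
  then show ?case using K_trans[OF 1] by simp
qed

lemma L2: "sorted_wrt (leS s) a \<Longrightarrow> \<forall>e\<in>set a. leS s e v \<Longrightarrow> ltS s v y \<Longrightarrow>
  K s (a @ y # v # c) (y # a @ v # c)"
proof (induction a arbitrary: v c rule: rev_induct)
  case Nil then show ?case by (simp add: K_refl)
next
  case (snoc e a0)
  have ev: "leS s e v" using snoc.prems(2) by simp
  have 1: "K s (a0 @ [e,y,v] @ c) (a0 @ [y,e,v] @ c)" using KB[OF ev snoc.prems(3)] K_ctx by blast
  have ey: "ltS s e y" using le_lt_lt[OF ev snoc.prems(3)] .
  have "K s (a0 @ y # e # (v # c)) (y # a0 @ e # (v # c))"
    using snoc.IH[of e "v # c"] snoc.prems(1) ey by (simp add: sorted_wrt_append)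
  then show ?case using K_trans[OF 1] by simp
qed

lemma row_none: "row_ins bump x r = (None, r') \<Longrightarrow> r' = r @ [x] \<and> (\<forall>e\<in>set r. \<not> bump x e)"
  by (induction r arbitrary: r') (auto split: if_splits prod.splits)

lemma row_some: "row_ins bump x r = (Some y, r') \<Longrightarrow>
  \<exists>j<length r. y = r ! j \<and> r' = r[j := x] \<and> bump x y \<and> (\<forall>i<j. \<not> bump x (r ! i))"
proof (induction r arbitrary: r')
  case Nil then show ?case by simp
next
  case (Cons e es)
  show ?case
  proof (cases "bump x e")
    case True then show ?thesis using Cons.prems by (intro exI[of _ 0]) auto
  next
    case False
    then obtain es' where es': "row_ins bump x es = (Some y, es')" "r' = e # es'"
      using Cons.prems by (auto split: prod.splits)
    from Cons.IH[OF es'(1)] obtain j where "j<length es" "y = es ! j" "es' = es[j := x]" "bump x y"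
      "\<forall>i<j. \<not> bump x (es ! i)" by blast
    then show ?thesis using False es'(2)
      by (intro exI[of _ "Suc j"]) (auto simp: nth_Cons split: nat.splits)
  qed
qed

lemma row_K:
  assumes sr: "sorted_wrt (leS s) r" and ri: "row_ins (ltS s) x r = (Some y, r')"
  shows "K s (r @ [x]) (y # r')"
proof -
  from row_some[OF ri] obtain j where j: "j<length r" "y = r ! j" "r' = r[j := x]" "ltS s x y"
      "\<forall>i<j. \<not> ltS s x (r ! i)" by blast
  define a where "a = take j r"
  define b where "b = drop (Suc j) r"
  have r: "r = a @ y # b" using j by (simp add: a_def b_def id_take_nth_drop)
  have r': "r' = a @ x # b" using j by (simp add: a_def b_def upd_conv_take_nth_drop)
  have sa: "sorted_wrt (leS s) a" and syb: "sorted_wrt (leS s) (y # b)"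
    using sr r by (auto simp: sorted_wrt_append)
  have ae: "\<forall>e\<in>set a. leS s e x"
  proof
    fix e assume "e \<in> set a"
    then obtain i where "i < j" "e = r ! i" using j(1) by (auto simp: a_def in_set_conv_nth)
    then show "leS s e x" using j(5) by (simp add: not_ltS)
  qed
  have "K s (a @ (y # b @ [x])) (a @ (y # x # b))" using K_ctx1 L1[OF syb j(4)] by blast
  moreover have "K s (a @ y # x # b) (y # a @ x # b)" using L2[OF sa ae j(4)] .
  ultimately show ?thesis using r r' K_trans by fastforce
qed

lemma row_sorted:
  assumes sr: "sorted_wrt (leS s) r" and ri: "row_ins (ltS s) x r = (c, r')"
  shows "sorted_wrt (leS s) r'"
proof (cases c)
  case None
  then show ?thesis using row_none[of "ltS s" x r r'] ri sr by (auto simp: sorted_wrt_append not_ltS)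
next
  case (Some y)
  from row_some[of "ltS s" x r y r'] ri Some obtain j where j: "j<length r" "y = r ! j" "r' = r[j := x]" "ltS s x y"
      "\<forall>i<j. \<not> ltS s x (r ! i)" by blast
  show ?thesis unfolding sorted_wrt_iff_nth_less
  proof (intro allI impI)
    fix i l assume il: "i < l" "l < length r'"
    have srn: "\<And>i l. i < l \<Longrightarrow> l < length r \<Longrightarrow> leS s (r!i) (r!l)" using sr by (simp add: sorted_wrt_iff_nth_less)
    show "leS s (r' ! i) (r' ! l)"
    proof (cases "i = j")
      case True
      then show ?thesis using il j srn[of j l] lt_le_le by (auto simp: nth_list_update)
    next
      case False
      then show ?thesis using il j srn[of i l] srn[of i j] not_ltS by (auto simp: nth_list_update)
    qed
  qed
qed

definition rw :: "nat list list \<Rightarrow> nat list" where "rw T = concat (rev T)"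

lemma tab_ins_K:
  "\<forall>r\<in>set T. sorted_wrt (leS s) r \<Longrightarrow> K s (rw T @ [x]) (rw (tab_ins (ltS s) x T))
     \<and> (\<forall>r\<in>set (tab_ins (ltS s) x T). sorted_wrt (leS s) r)"
proof (induction T arbitrary: x)
  case Nil then show ?case by (simp add: rw_def K_refl)
next
  case (Cons r rs)
  show ?case
  proof (cases "row_ins (ltS s) x r")
    case (Pair c r')
    have sr': "sorted_wrt (leS s) r'" using row_sorted Cons.prems Pair by auto
    show ?thesis
    proof (cases c)
      case None
      then show ?thesis using Pair row_none[of "ltS s" x r r'] sr' Cons.prems by (simp add: rw_def K_refl)
    next
      case (Some y)
      have k1: "K s (rw rs @ (r @ [x])) (rw rs @ (y # r'))" using K_ctx1 row_K Pair Some Cons.prems by auto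
      have ih: "K s (rw rs @ [y]) (rw (tab_ins (ltS s) y rs))" "\<forall>r\<in>set (tab_ins (ltS s) y rs). sorted_wrt (leS s) r"
        using Cons.IH Cons.prems by auto
      have k2: "K s ((rw rs @ [y]) @ r') (rw (tab_ins (ltS s) y rs) @ r')" using K_ctx2 ih(1) by blast
      show ?thesis using K_trans[OF k1] k2 ih(2) sr' Pair Some by (simp add: rw_def)
    qed
  qed
qed

lemma rsk_K: "K s u (rw (rsk (ltS s) u)) \<and> (\<forall>r\<in>set (rsk (ltS s) u). sorted_wrt (leS s) r)"
proof (induction u rule: rev_induct)
  case Nil then show ?case by (simp add: rsk_def rw_def K_refl)
next
  case (snoc x u)
  have e: "rsk (ltS s) (u @ [x]) = tab_ins (ltS s) x (rsk (ltS s) u)" by (simp add: rsk_def)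
  have "K s (u @ [x]) (rw (rsk (ltS s) u) @ [x])" using K_ctx2 snoc by blast
  then show ?case using e tab_ins_K[of "rsk (ltS s) u" s x] snoc K_trans by auto
qed




fun above :: "(nat \<Rightarrow> bool) \<Rightarrow> nat list \<Rightarrow> nat list list \<Rightarrow> bool" where
  "above s R [] = True"
| "above s R (r # _) = (length r \<le> length R \<and> (\<forall>j<length r. ltS s (R ! j) (r ! j)))"

fun tab :: "(nat \<Rightarrow> bool) \<Rightarrow> nat list list \<Rightarrow> bool" where
  "tab s [] = True"
| "tab s (r # rs) = (sorted_wrt (leS s) r \<and> above s r rs \<and> tab s rs)"

lemma above_ins:
  assumes T: "tab s T" and a: "above s R T" and sR: "sorted_wrt (leS s) R" and j: "j < length R"
    and y: "y = R ! j" and xy: "ltS s x' y" and lej: "\<forall>i<j. leS s (R ! i) x'"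
  shows "above s (R[j := x']) (tab_ins (ltS s) y T)"
proof -
  have colj: "\<And>l. l \<le> j \<Longrightarrow> ltS s (R[j := x'] ! l) y"
  proof -
    fix l assume l: "l \<le> j"
    show "ltS s (R[j := x'] ! l) y"
    proof (cases "l = j")
      case True then show ?thesis using j xy by simp
    next
      case False
      then have "l < j" using l by simp
      then have "leS s (R ! l) x'" using lej by simp
      then show ?thesis using False j le_lt_lt[OF _ xy] by (simp add: nth_list_update)
    qed
  qed
  show ?thesis
  proof (cases T)
    case Nil then show ?thesis using j colj[of 0] by simp
  next
    case (Cons r1 rs)
    have a1: "length r1 \<le> length R" "\<forall>l<length r1. ltS s (R ! l) (r1 ! l)" using a Cons by auto
    show ?thesis
    proof (cases "row_ins (ltS s) y r1")
      case (Pair c r1')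
      show ?thesis
      proof (cases c)
        case None
        have rn: "r1' = r1 @ [y]" "\<forall>e\<in>set r1. \<not> ltS s y (e)" using row_none[of "ltS s" y r1 r1'] Pair None by auto
        have lj: "length r1 \<le> j"
        proof (rule ccontr)
          assume "\<not> length r1 \<le> j"
          then have "ltS s y (r1 ! j)" using a1 y by auto
          then show False using rn(2) \<open>\<not> length r1 \<le> j\<close> by auto
        qed
        have "\<forall>l<length r1'. ltS s (R[j := x'] ! l) (r1' ! l)"
        proof (intro allI impI)
          fix l assume "l < length r1'"
          then have "l < length r1 \<or> l = length r1" using rn by auto
          then show "ltS s (R[j := x'] ! l) (r1' ! l)"
          proof
            assume "l < length r1" then show ?thesis using a1 lj rn by (auto simp: nth_list_update nth_append)
          next
            assume "l = length r1" then show ?thesis using colj lj rn by auto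
          qed
        qed
        moreover have "tab_ins (ltS s) y T = r1' # rs" using Cons Pair None by simp
        moreover have "length r1' \<le> length R" using rn lj j by simp
        ultimately show ?thesis by simp
      next
        case (Some z)
        obtain j' where j': "j'<length r1" "z = r1 ! j'" "r1' = r1[j' := y]" "ltS s y z"
          "\<forall>i<j'. \<not> ltS s y (r1 ! i)" using row_some[of "ltS s" y r1 z r1'] Pair Some by auto
        have jj: "j' \<le> j"
        proof (rule ccontr)
          assume "\<not> j' \<le> j"
          then have "ltS s y (r1 ! j)" using a1 y j' by auto
          then show False using j'(5) \<open>\<not> j' \<le> j\<close> by auto
        qed
        have "\<forall>l<length r1'. ltS s (R[j := x'] ! l) (r1' ! l)"
        proof (intro allI impI)
          fix l assume l: "l < length r1'"
          show "ltS s (R[j := x'] ! l) (r1' ! l)"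
          proof (cases "l = j'")
            case True then show ?thesis using colj jj j' by simp
          next
            case False
            show ?thesis
            proof (cases "l = j")
              case True
              have "ltS s y (r1 ! j)" using a1 y l j' True by auto
              then show ?thesis using True False j' j xy lt_lt by auto
            next
              case False2: False
              then show ?thesis using False a1 l j' by (auto simp: nth_list_update)
            qed
          qed
        qed
        then show ?thesis using Cons Pair Some j' a1 by auto
      qed
    qed
  qed
qed

lemma tab_ins_tab: "tab s T \<Longrightarrow> tab s (tab_ins (ltS s) x T)"
proof (induction T arbitrary: x)
  case Nil then show ?case by simp
next
  case (Cons r rs)
  show ?case
  proof (cases "row_ins (ltS s) x r")
    case (Pair c r')
    have sr': "sorted_wrt (leS s) r'" using row_sorted Cons.prems Pair by auto
    show ?thesis
    proof (cases c)
      case None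
      have rn: "r' = r @ [x]" using row_none[of "ltS s" x r r'] Pair None by auto
      have "above s r' rs" using Cons.prems rn by (cases rs) (auto simp: nth_append)
      then show ?thesis using Pair None Cons.prems sr' by simp
    next
      case (Some y)
      obtain j where j: "j<length r" "y = r ! j" "r' = r[j := x]" "ltS s x y"
          "\<forall>i<j. \<not> ltS s x (r ! i)" using row_some[of "ltS s" x r y r'] Pair Some by auto
      have "above s r' (tab_ins (ltS s) y rs)"
        using above_ins[of s rs r j y x] Cons.prems j by (simp add: not_ltS)
      then show ?thesis using Pair Some Cons.prems Cons.IH sr' by simp
    qed
  qed
qed

lemma rsk_tab: "tab s (rsk (ltS s) u)"
proof (induction u rule: rev_induct)
  case Nil then show ?case by (simp add: rsk_def)
next
  case (snoc x u)
  then show ?case using tab_ins_tab by (simp add: rsk_def)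
qed




fun colf :: "nat \<Rightarrow> nat \<Rightarrow> nat list list \<Rightarrow> (nat \<times> nat option) list" where
  "colf k off [] = []"
| "colf k off (r # rs) = colf k (Suc off) rs @ map (\<lambda>a. (a, if off < k then Some off else None)) r"

lemma colf_props:
  "\<forall>r\<in>set T. sorted_wrt (leS s) r \<Longrightarrow>
   map fst (colf k off T) = rw T \<and> valid s k (colf k off T) \<and>
   cnt (colf k off T) = sum_list (take (k - off) (map length T)) \<and>
   (\<forall>p\<in>set (colf k off T). \<forall>m. snd p = Some m \<longrightarrow> off \<le> m)"
proof (induction T arbitrary: off)
  case Nil then show ?case by (simp add: rw_def valid_def)
next
  case (Cons r rs)
  let ?c = "if off < k then Some off else None"
  have ih: "map fst (colf k (Suc off) rs) = rw rs" "valid s k (colf k (Suc off) rs)"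
     "cnt (colf k (Suc off) rs) = sum_list (take (k - Suc off) (map length rs))"
     "\<forall>p\<in>set (colf k (Suc off) rs). \<forall>m. snd p = Some m \<longrightarrow> Suc off \<le> m"
    using Cons by auto
  have sr: "sorted_wrt (leS s) r" using Cons.prems by simp
  have s1: "sorted_wrt (Rc s) (map (\<lambda>a. (a, ?c)) r)"
    unfolding sorted_wrt_map by (rule sorted_wrt_mono_rel[OF _ sr]) (simp add: Rc_def)
  have cr: "\<forall>p\<in>set (colf k (Suc off) rs). \<forall>q\<in>set (map (\<lambda>a. (a, ?c)) r). Rc s p q"
  proof (intro ballI)
    fix p q assume p: "p \<in> set (colf k (Suc off) rs)" and q: "q \<in> set (map (\<lambda>a. (a, ?c)) r)"
    have "snd q = ?c" using q by auto
    moreover have "snd p \<noteq> Some off" using ih(4) p by fastforce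
    ultimately show "Rc s p q" unfolding Rc_def by (cases "off < k") auto
  qed
  have bd: "\<forall>p\<in>set (map (\<lambda>a. (a, ?c)) r). \<forall>m. snd p = Some m \<longrightarrow> m < k" by auto
  have v: "valid s k (colf k off (r # rs))"
    using ih(2) s1 cr bd unfolding valid_def colf.simps sorted_wrt_append set_append by blast
  have c: "cnt (map (\<lambda>a. (a, ?c)) r) = (if off < k then length r else 0)"
    by (simp add: cnt_def)
  have "cnt (colf k off (r # rs)) = sum_list (take (k - off) (map length (r # rs)))"
  proof (cases "off < k")
    case True
    then have "take (k - off) (map length (r # rs)) = length r # take (k - Suc off) (map length rs)"
      using Suc_diff_Suc[OF True] by (metis list.simps(9) take_Suc_Cons)
    then show ?thesis using ih(3) c True by simp
  next
    case False
    then show ?thesis using ih(3) c by simp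
  qed
  moreover have "map fst (colf k off (r # rs)) = rw (r # rs)" using ih(1) by (simp add: rw_def comp_def)
  ultimately show ?case using ih(4) v by auto
qed

lemma sum_lam: "(\<Sum>i=1..k. lam sh i) = sum_list (take k sh)"
proof (induction k)
  case 0 then show ?case by simp
next
  case (Suc k)
  have "(\<Sum>i=1..Suc k. lam sh i) = (\<Sum>i=1..k. lam sh i) + lam sh (Suc k)" by simp
  also have "\<dots> = sum_list (take k sh) + lam sh (Suc k)" using Suc by simp
  also have "\<dots> = sum_list (take (Suc k) sh)"
    by (cases "k < length sh") (auto simp: lam_def take_Suc_conv_app_nth)
  finally show ?case .
qed

lemma split_rows: "map fst ps = concat (rev T) \<Longrightarrow> \<exists>PS. ps = concat (rev PS) \<and> map (map fst) PS = T"
proof (induction T arbitrary: ps)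
  case Nil then show ?case by simp
next
  case (Cons r rs)
  then obtain us vs where "ps = us @ vs" "map fst us = concat (rev rs)" "map fst vs = r"
    by (auto simp: map_eq_append_conv)
  moreover from Cons.IH[OF this(2)] obtain PS0 where "us = concat (rev PS0)" "map (map fst) PS0 = rs" by blast
  ultimately show ?case by (intro exI[of _ "vs # PS0"]) auto
qed

lemma tab_len: "tab s (R # rs) \<Longrightarrow> r \<in> set rs \<Longrightarrow> length r \<le> length R"
proof (induction rs arbitrary: R)
  case Nil then show ?case by simp
next
  case (Cons r1 rs)
  show ?case
  proof (cases "r = r1")
    case True then show ?thesis using Cons.prems by simp
  next
    case False
    then have "length r \<le> length r1" using Cons.IH[of r1] Cons.prems by simp
    moreover have "length r1 \<le> length R" using Cons.prems by simp
    ultimately show ?thesis by simp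
  qed
qed

lemma tab_hd: "tab s (R # rs) \<Longrightarrow> r \<in> set rs \<Longrightarrow> r \<noteq> [] \<Longrightarrow> ltS s (hd R) (hd r) \<and> R \<noteq> []"
proof (induction rs arbitrary: R)
  case Nil then show ?case by simp
next
  case (Cons r1 rs)
  show ?case
  proof (cases "r = r1")
    case True
    then show ?thesis using Cons.prems by (cases r1; cases R) auto
  next
    case False
    then have "r \<in> set rs" using Cons.prems by simp
    then have "ltS s (hd r1) (hd r) \<and> r1 \<noteq> []" using Cons.IH[of r1] Cons.prems by simp
    moreover have "ltS s (hd R) (hd r1) \<and> R \<noteq> []" using Cons.prems calculation by (cases r1; cases R) auto
    ultimately show ?thesis using lt_lt by blast
  qed
qed

lemma tab_tl: "tab s T \<Longrightarrow> tab s (map tl T)"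
proof (induction T)
  case Nil then show ?case by simp
next
  case (Cons r rs)
  have "sorted_wrt (leS s) (tl r)" using Cons.prems by (cases r) auto
  moreover have "above s (tl r) (map tl rs)"
    using Cons.prems by (cases rs) (auto simp: nth_tl)
  ultimately show ?case using Cons by simp
qed

lemma set_tl_sub: "x \<in> set (tl r) \<Longrightarrow> x \<in> set r" by (cases r) auto

lemma set_concat_tl: "x \<in> set (concat (rev (map tl PS))) \<Longrightarrow> x \<in> set (concat (rev PS))"
  by (auto dest: set_tl_sub)

lemma sorted_tl_rows: "sorted_wrt R (concat (rev PS)) \<Longrightarrow> sorted_wrt R (concat (rev (map tl PS)))"
proof (induction PS)
  case Nil then show ?case by simp
next
  case (Cons p PS)
  have "sorted_wrt R (tl p)" using Cons.prems by (cases p) (auto simp: sorted_wrt_append)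
  then show ?case using Cons by (simp add: sorted_wrt_append) (metis set_tl_sub)
qed

lemma valid_tl_rows: "valid s k (concat (rev PS)) \<Longrightarrow> valid s k (concat (rev (map tl PS)))"
  unfolding valid_def using sorted_tl_rows set_concat_tl by metis

lemma cnt_rows: "cnt (concat (rev PS)) = sum_list (map cnt PS)"
  by (induction PS) auto

lemma cnt_tl: "sum_list (map cnt PS) = sum_list (map cnt (map tl PS)) +
   length (filter (\<lambda>r. r \<noteq> [] \<and> snd (hd r) \<noteq> None) PS)"
proof (induction PS)
  case Nil then show ?case by simp
next
  case (Cons p PS) then show ?case by (cases p) auto
qed

lemma len_tl: "sum_list (take k (map length PS)) = sum_list (take k (map length (map tl PS))) +
   length (filter (\<lambda>r. r \<noteq> []) (take k PS))"
proof (induction PS arbitrary: k)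
  case Nil then show ?case by simp
next
  case (Cons p PS) then show ?case by (cases k; cases p) auto
qed

lemma empty_rest: "tab s ([] # rs) \<Longrightarrow> r \<in> set rs \<Longrightarrow> r = []"
  using tab_len by fastforce

lemma filt_take: "tab s T \<Longrightarrow> length (filter (\<lambda>r. r \<noteq> []) (take k T)) = min k (length (filter (\<lambda>r. r \<noteq> []) T))"
proof (induction T arbitrary: k)
  case Nil then show ?case by simp
next
  case (Cons r rs)
  show ?case
  proof (cases "r = []")
    case True
    then have "\<forall>r\<in>set rs. r = []" using empty_rest Cons.prems by blast
    then have "filter (\<lambda>r. r \<noteq> []) rs = []" "filter (\<lambda>r. r \<noteq> []) (take k' rs) = []" for k'
      by (auto simp: filter_empty_conv dest: in_set_takeD)
    then show ?thesis using True by (cases k) auto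
  next
    case False
    then show ?thesis using Cons by (cases k) auto
  qed
qed

lemma hd_colors_distinct:
  "tab s (map (map fst) PS) \<Longrightarrow> valid s k (concat (rev PS)) \<Longrightarrow>
   distinct (map (\<lambda>r. snd (hd r)) (filter (\<lambda>r. r \<noteq> [] \<and> snd (hd r) \<noteq> None) PS))"
proof (induction PS)
  case Nil then show ?case by simp
next
  case (Cons p PS)
  have t: "tab s (map (map fst) PS)" using Cons.prems by simp
  have v: "valid s k (concat (rev PS))" using Cons.prems unfolding valid_def by (simp add: sorted_wrt_append) blast
  have cross: "\<forall>q\<in>set (concat (rev PS)). \<forall>q'\<in>set p. Rc s q q'"
    using Cons.prems by (simp add: valid_def sorted_wrt_append)
  have new: "snd (hd p) \<notin> snd ` hd ` {r \<in> set PS. r \<noteq> [] \<and> snd (hd r) \<noteq> None}" if "p \<noteq> []" "snd (hd p) \<noteq> None"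
  proof
    assume "snd (hd p) \<in> snd ` hd ` {r \<in> set PS. r \<noteq> [] \<and> snd (hd r) \<noteq> None}"
    then obtain r where r: "r \<in> set PS" "r \<noteq> []" "snd (hd r) = snd (hd p)" by auto
    have "hd r \<in> set r" using r(2) by simp
    then have "hd r \<in> set (concat (rev PS))" using r(1) by auto
    then have "Rc s (hd r) (hd p)" using cross that by auto
    then have le: "leS s (fst (hd r)) (fst (hd p))" using r that by (simp add: Rc_def)
    have "map fst r \<in> set (map (map fst) PS)" using r by auto
    then have "ltS s (hd (map fst p)) (hd (map fst r))"
      using tab_hd[of s "map fst p" "map (map fst) PS" "map fst r"] Cons.prems r by auto
    then show False using le that r by (simp add: hd_map not_ltS[symmetric])
  qed
  show ?case using Cons.IH[OF t v] new by auto
qed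

lemma len_filter_conj: "length (filter (\<lambda>r. P r \<and> Q r) xs) \<le> length (filter P xs)"
  by (induction xs) auto

lemma len_filter_map_fst: "length (filter (\<lambda>r. r \<noteq> []) (map (map fst) Xs)) = length (filter (\<lambda>r. r \<noteq> []) Xs)"
  by (induction Xs) auto

lemma key_count:
  assumes t: "tab s (map (map fst) PS)" and v: "valid s k (concat (rev PS))"
  shows "length (filter (\<lambda>r. r \<noteq> [] \<and> snd (hd r) \<noteq> None) PS) \<le> length (filter (\<lambda>r. r \<noteq> []) (take k PS))"
proof -
  define L where "L = filter (\<lambda>r. r \<noteq> [] \<and> snd (hd r) \<noteq> None) PS"
  define C where "C = map (\<lambda>r. snd (hd r)) L"
  have d: "distinct C" using hd_colors_distinct[OF t v] unfolding C_def L_def .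
  have sub: "set C \<subseteq> Some ` {..<k}"
  proof
    fix c assume "c \<in> set C"
    then obtain r where r: "r \<in> set PS" "r \<noteq> []" "snd (hd r) \<noteq> None" "c = snd (hd r)"
      unfolding C_def L_def by auto
    have "hd r \<in> set r" using r(2) by simp
    then have "hd r \<in> set (concat (rev PS))" using r(1) by auto
    then have "\<forall>m. snd (hd r) = Some m \<longrightarrow> m < k" using v unfolding valid_def by blast
    then show "c \<in> Some ` {..<k}" using r(3,4) by auto
  qed
  have "length C = card (set C)" using distinct_card[OF d] by simp
  also have "\<dots> \<le> card (Some ` {..<k})" by (rule card_mono[OF _ sub]) simp
  also have "\<dots> = k" by (simp add: card_image)
  finally have lk: "length L \<le> k" unfolding C_def by simp
  have lh: "length L \<le> length (filter (\<lambda>r. r \<noteq> []) PS)" unfolding L_def by (rule len_filter_conj)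
  have "length (filter (\<lambda>r. r \<noteq> []) (take k (map (map fst) PS))) = min k (length (filter (\<lambda>r. r \<noteq> []) (map (map fst) PS)))"
    using filt_take[OF t] .
  then have "length (filter (\<lambda>r. r \<noteq> []) (take k PS)) = min k (length (filter (\<lambda>r. r \<noteq> []) PS))"
    unfolding take_map len_filter_map_fst .
  then show ?thesis using lk lh unfolding L_def by simp
qed

lemma col_bound_N:
  "\<forall>r\<in>set PS. length r \<le> N \<Longrightarrow> tab s (map (map fst) PS) \<Longrightarrow> valid s k (concat (rev PS)) \<Longrightarrow>
   sum_list (map cnt PS) \<le> sum_list (take k (map length PS))"
proof (induction N arbitrary: PS)
  case 0
  then have "\<forall>r\<in>set PS. r = []" by auto
  then have "\<forall>n\<in>set (map cnt PS). n = 0" by auto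
  then have z: "sum_list (map cnt PS) = 0" by (simp only: sum_list_eq_0_iff)
  show ?case unfolding z by simp
next
  case (Suc N)
  have a: "\<forall>r\<in>set (map tl PS). length r \<le> N" using Suc.prems(1) by auto
  have b: "tab s (map (map fst) (map tl PS))"
    using tab_tl[OF Suc.prems(2)] by (simp add: map_tl comp_def)
  have c: "valid s k (concat (rev (map tl PS)))" using valid_tl_rows Suc.prems(3) by blast
  have ih: "sum_list (map cnt (map tl PS)) \<le> sum_list (take k (map length (map tl PS)))"
    using Suc.IH[OF a b c] .
  show ?case using ih cnt_tl[of PS] len_tl[of k PS] key_count[OF Suc.prems(2,3)] by linarith
qed

lemma col_bound:
  assumes t: "tab s T" and m: "map fst ps = rw T" and v: "valid s k ps"
  shows "cnt ps \<le> sum_list (take k (map length T))"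
proof -
  from split_rows[of ps T] m obtain PS where PS: "ps = concat (rev PS)" "map (map fst) PS = T"
    by (auto simp: rw_def)
  have "\<forall>r\<in>set PS. length r \<le> sum_list (map length PS)"
    by (simp add: member_le_sum_list)
  moreover have "tab s (map (map fst) PS)" using t PS(2) by simp
  moreover have "valid s k (concat (rev PS))" using v PS(1) by simp
  ultimately have "sum_list (map cnt PS) \<le> sum_list (take k (map length PS))"
    using col_bound_N by blast
  moreover have "map length T = map length PS" unfolding PS(2)[symmetric] by simp
  moreover have "cnt ps = sum_list (map cnt PS)" unfolding PS(1) by (rule cnt_rows)
  ultimately show ?thesis by simp
qed




lemma greene_mono:
  assumes len: "length u' = length u"
    and ch: "\<forall>i j. i < j \<longrightarrow> j < length u \<longrightarrow> leS s (u!i) (u!j) \<longrightarrow> leS s' (u'!i) (u'!j)"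
  shows "sum_list (take k (map length (rsk (ltS s) u))) \<le> sum_list (take k (map length (rsk (ltS s') u')))"
proof -
  let ?T = "rsk (ltS s) u"
  let ?T' = "rsk (ltS s') u'"
  have K1: "K s u (rw ?T)" and sr: "\<forall>r\<in>set ?T. sorted_wrt (leS s) r" using rsk_K by blast+
  have K2: "K s' u' (rw ?T')" using rsk_K by blast
  from colf_props[OF sr, of k 0] have c: "map fst (colf k 0 ?T) = rw ?T" "valid s k (colf k 0 ?T)"
    "cnt (colf k 0 ?T) = sum_list (take k (map length ?T))" by auto
  from K1 have "D s (rw ?T) u" by (simp add: K_def)
  then obtain ps0 where ps0: "map fst ps0 = u" "valid s k ps0" "cnt ps0 = sum_list (take k (map length ?T))"
    using c unfolding D_def by (metis append_Nil append_Nil2)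
  define ps1 where "ps1 = zip u' (map snd ps0)"
  have lp: "length ps0 = length u" using ps0(1) by (metis length_map)
  have m1: "map fst ps1 = u'" using len lp by (simp add: ps1_def)
  have sn: "map snd ps1 = map snd ps0" using len lp by (simp add: ps1_def)
  have c1: "cnt ps1 = cnt ps0"
  proof -
    have "\<And>xs. cnt xs = length (filter (\<lambda>c. c \<noteq> None) (map snd xs))"
      by (simp add: cnt_def filter_map comp_def)
    then show ?thesis using sn by metis
  qed
  have nth1: "\<And>i. i < length u \<Longrightarrow> ps1 ! i = (u' ! i, snd (ps0 ! i))" using len lp by (simp add: ps1_def)
  have nth0: "\<And>i. i < length u \<Longrightarrow> fst (ps0 ! i) = u ! i" using ps0(1) lp by (metis nth_map)
  have l1: "length ps1 = length u" using len lp by (simp add: ps1_def)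
  have v1: "valid s' k ps1"
    unfolding valid_def
  proof
    show "\<forall>p\<in>set ps1. \<forall>m. snd p = Some m \<longrightarrow> m < k"
    proof (intro ballI allI impI)
      fix p m assume "p \<in> set ps1" "snd p = Some m"
      then have "Some m \<in> set (map snd ps0)" using sn by (metis image_eqI list.set_map)
      then obtain q where "q \<in> set ps0" "snd q = Some m" by auto
      then show "m < k" using ps0(2) by (auto simp: valid_def)
    qed
    show "sorted_wrt (Rc s') ps1" unfolding sorted_wrt_iff_nth_less
    proof (intro allI impI)
      fix i j assume ij: "i < j" "j < length ps1"
      have "Rc s (ps0 ! i) (ps0 ! j)" using ps0(2) ij l1 lp unfolding valid_def sorted_wrt_iff_nth_less by auto
      then show "Rc s' (ps1 ! i) (ps1 ! j)" using ij l1 nth1 nth0 ch unfolding Rc_def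
        by (metis fst_conv order.strict_trans snd_conv)
    qed
  qed
  from K2 have "D s' u' (rw ?T')" by (simp add: K_def)
  then obtain ps2 where ps2: "map fst ps2 = rw ?T'" "valid s' k ps2" "cnt ps2 = cnt ps1"
    using m1 v1 unfolding D_def by (metis append_Nil append_Nil2)
  have "cnt ps2 \<le> sum_list (take k (map length ?T'))" using col_bound[OF rsk_tab ps2(1,2)] .
  then show ?thesis using ps2(3) c1 ps0(3) by simp
qed

lemma embed:
  fixes S :: "'a set" and r :: "'a \<Rightarrow> 'a \<Rightarrow> bool" and st :: "'a \<Rightarrow> bool"
  assumes fin: "finite S" and irr: "\<forall>a\<in>S. \<not> r a a"
    and tr: "\<forall>a\<in>S. \<forall>b\<in>S. \<forall>c\<in>S. r a b \<longrightarrow> r b c \<longrightarrow> r a c"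
    and tot: "\<forall>a\<in>S. \<forall>b\<in>S. a \<noteq> b \<longrightarrow> r a b \<or> r b a"
  shows "\<exists>f s. \<forall>a\<in>S. \<forall>b\<in>S. (ltS s (f a) (f b) = (r a b \<or> (a = b \<and> \<not> st a))) \<and>
                              (leS s (f a) (f b) = (r a b \<or> (a = b \<and> st a)))"
proof -
  define f where "f a = card {c\<in>S. r c a}" for a
  have mono: "f a < f b" if "a \<in> S" "b \<in> S" "r a b" for a b
  proof -
    have "{c\<in>S. r c a} \<subset> {c\<in>S. r c b}"
    proof
      show "{c\<in>S. r c a} \<subseteq> {c\<in>S. r c b}" using tr that by blast
      show "{c\<in>S. r c a} \<noteq> {c\<in>S. r c b}" using that irr by blast
    qed
    then show ?thesis unfolding f_def by (rule psubset_card_mono[rotated]) (simp add: fin)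
  qed
  have iff: "r a b \<longleftrightarrow> f a < f b" if "a \<in> S" "b \<in> S" for a b
  proof
    assume "r a b" then show "f a < f b" using mono that by blast
  next
    assume h: "f a < f b"
    show "r a b"
    proof (rule ccontr)
      assume "\<not> r a b"
      moreover have "a \<noteq> b" using h by auto
      ultimately have "r b a" using tot that by blast
      then show False using mono[of b a] that h by simp
    qed
  qed
  have inj: "f a = f b \<Longrightarrow> a = b" if "a \<in> S" "b \<in> S" for a b
    using iff[of a b] iff[of b a] that tot by force
  define s where "s n = (\<exists>a\<in>S. f a = n \<and> st a)" for n
  have ss: "s (f a) = st a" if "a \<in> S" for a using inj that unfolding s_def by blast
  show ?thesis
  proof (intro exI ballI conjI)
    fix a b assume ab: "a \<in> S" "b \<in> S"
    show "ltS s (f a) (f b) = (r a b \<or> (a = b \<and> \<not> st a))"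
      unfolding ltS_def using iff[OF ab] inj[OF ab] ss[OF ab(1)] by auto
    show "leS s (f a) (f b) = (r a b \<or> (a = b \<and> st a))"
      unfolding leS_def using iff[OF ab] inj[OF ab] ss[OF ab(1)] by auto
  qed
qed

lemma row_ins_map:
  assumes "\<forall>a\<in>S. \<forall>b\<in>S. bump a b = bump' (f a) (f b)" "x \<in> S" "set r \<subseteq> S"
  shows "row_ins bump' (f x) (map f r) = map_prod (map_option f) (map f) (row_ins bump x r)
     \<and> (\<forall>y. fst (row_ins bump x r) = Some y \<longrightarrow> y \<in> S) \<and> set (snd (row_ins bump x r)) \<subseteq> S"
  using assms(3)
proof (induction r)
  case Nil then show ?case using assms(2) by simp
next
  case (Cons e es)
  have b: "bump' (f x) (f e) = bump x e" using assms(1,2) Cons.prems by simp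
  show ?case using Cons b assms(2) by (auto split: prod.splits)
qed

lemma tab_ins_map:
  assumes "\<forall>a\<in>S. \<forall>b\<in>S. bump a b = bump' (f a) (f b)"
  shows "x \<in> S \<Longrightarrow> \<forall>r\<in>set T. set r \<subseteq> S \<Longrightarrow>
    tab_ins bump' (f x) (map (map f) T) = map (map f) (tab_ins bump x T) \<and> (\<forall>r\<in>set (tab_ins bump x T). set r \<subseteq> S)"
proof (induction T arbitrary: x)
  case Nil then show ?case by simp
next
  case (Cons r rs)
  have R: "row_ins bump' (f x) (map f r) = map_prod (map_option f) (map f) (row_ins bump x r)"
     "\<forall>y. fst (row_ins bump x r) = Some y \<longrightarrow> y \<in> S" "set (snd (row_ins bump x r)) \<subseteq> S"
    using row_ins_map[where S=S and bump=bump and bump'=bump' and f=f and x=x and r=r, OF assms Cons.prems(1)] Cons.prems(2) by auto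
  show ?case
  proof (cases "row_ins bump x r")
    case (Pair c r')
    show ?thesis
    proof (cases c)
      case None then show ?thesis using R Pair Cons.prems by simp
    next
      case (Some y)
      then have "y \<in> S" using R Pair by simp
      then show ?thesis using R Pair Some Cons.prems Cons.IH[of y] by simp
    qed
  qed
qed

lemma rsk_map:
  assumes "\<forall>a\<in>S. \<forall>b\<in>S. bump a b = bump' (f a) (f b)"
  shows "set w \<subseteq> S \<Longrightarrow> rsk bump' (map f w) = map (map f) (rsk bump w) \<and> (\<forall>r\<in>set (rsk bump w). set r \<subseteq> S)"
proof (induction w rule: rev_induct)
  case Nil then show ?case by (simp add: rsk_def)
next
  case (snoc x w)
  then have ih: "rsk bump' (map f w) = map (map f) (rsk bump w)" "\<forall>r\<in>set (rsk bump w). set r \<subseteq> S" "x \<in> S"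
    by auto
  show ?case using tab_ins_map[where S=S and bump=bump and bump'=bump' and f=f and x=x and T="rsk bump w", OF assms ih(3,2)] ih(1) by (simp add: rsk_def)
qed




locale amsetup =
  fixes A :: "letter set" and p :: "letter rel" and I :: "letter set"
  assumes lin: "linear_order_on A p" and iv: "interval_wrt A p I" and ne: "I \<noteq> {}"
begin

lemma pA: "(a, b) \<in> p \<Longrightarrow> a \<in> A \<and> b \<in> A"
  using lin unfolding linear_order_on_def partial_order_on_def preorder_on_def by blast
lemma prefl: "a \<in> A \<Longrightarrow> (a, a) \<in> p"
  using lin unfolding linear_order_on_def partial_order_on_def preorder_on_def refl_on_def by blast
lemma ptrans: "(a, b) \<in> p \<Longrightarrow> (b, c) \<in> p \<Longrightarrow> (a, c) \<in> p"
  using lin unfolding linear_order_on_def partial_order_on_def preorder_on_def trans_def by blast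
lemma pantisym: "(a, b) \<in> p \<Longrightarrow> (b, a) \<in> p \<Longrightarrow> a = b"
  using lin unfolding linear_order_on_def partial_order_on_def antisym_def by blast
lemma ptotal: "a \<in> A \<Longrightarrow> b \<in> A \<Longrightarrow> a \<noteq> b \<Longrightarrow> (a, b) \<in> p \<or> (b, a) \<in> p"
  using lin unfolding linear_order_on_def total_on_def by blast
lemma IA: "I \<subseteq> A" using iv unfolding interval_wrt_def by blast
lemma ivl: "a1 \<in> I \<Longrightarrow> a2 \<in> I \<Longrightarrow> a \<in> A \<Longrightarrow> (a1, a) \<in> p \<Longrightarrow> (a, a2) \<in> p \<Longrightarrow> a \<in> I"
  using iv unfolding interval_wrt_def by blast

abbreviation "Q \<equiv> amalg_order A p I"

lemma Q_cases: "(x, y) \<in> Q \<longleftrightarrow>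
   (\<exists>a b. x = Some a \<and> y = Some b \<and> a \<in> A - I \<and> b \<in> A - I \<and> (a, b) \<in> p) \<or>
   (x = None \<and> y = None) \<or>
   (\<exists>b. x = None \<and> y = Some b \<and> b \<in> A - I \<and> (\<exists>a\<in>I. (a, b) \<in> p)) \<or>
   (\<exists>a. x = Some a \<and> y = None \<and> a \<in> A - I \<and> (\<exists>b\<in>I. (a, b) \<in> p))"
  unfolding amalg_order_def by blast

lemma Qrefl: "x \<in> amalg_alph A I \<Longrightarrow> (x, x) \<in> Q"
  unfolding amalg_alph_def Q_cases using prefl by auto

lemma Qtrans: "(x, y) \<in> Q \<Longrightarrow> (y, z) \<in> Q \<Longrightarrow> x \<noteq> y \<Longrightarrow> y \<noteq> z \<Longrightarrow> (x, z) \<in> Q \<and> x \<noteq> z"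
proof (cases x; cases y; cases z)
  fix b assume h: "(x, y) \<in> Q" "(y, z) \<in> Q" "x = None" "y = Some b" "z = None"
  then obtain i i' where "i \<in> I" "i' \<in> I" "(i, b) \<in> p" "(b, i') \<in> p" "b \<in> A - I" by (auto simp: Q_cases)
  then show ?thesis using ivl by blast
next
  fix a c assume h: "(x, y) \<in> Q" "(y, z) \<in> Q" "x = Some a" "y = None" "z = Some c"
  then obtain i i' where ii: "i \<in> I" "i' \<in> I" "(a, i) \<in> p" "(i', c) \<in> p" "a \<in> A - I" "c \<in> A - I"
    by (auto simp: Q_cases)
  have "a \<noteq> c" using ii ivl[of i' i a] by auto
  moreover have "(a, c) \<in> p"
  proof (rule ccontr)
    assume "(a, c) \<notin> p"
    then have "(c, a) \<in> p" using ptotal[of a c] ii calculation by auto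
    then have "(c, i) \<in> p" using ii ptrans by blast
    then show False using ivl[of i' i c] ii by auto
  qed
  ultimately show ?thesis using h ii by (auto simp: Q_cases)
qed (auto simp: Q_cases intro: ptrans dest: pantisym)

lemma Qtotal: "x \<in> amalg_alph A I \<Longrightarrow> y \<in> amalg_alph A I \<Longrightarrow> x \<noteq> y \<Longrightarrow> (x, y) \<in> Q \<or> (y, x) \<in> Q"
proof -
  assume h: "x \<in> amalg_alph A I" "y \<in> amalg_alph A I" "x \<noteq> y"
  obtain i where i: "i \<in> I" using ne by blast
  have iA: "i \<in> A" using i IA by blast
  show ?thesis
  proof (cases x; cases y)
    fix a b assume "x = Some a" "y = Some b"
    then show ?thesis using h ptotal[of a b] unfolding amalg_alph_def by (auto simp: Q_cases)
  next
    fix a assume xy: "x = Some a" "y = None"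
    then have "a \<in> A - I" using h unfolding amalg_alph_def by auto
    then have "(a, i) \<in> p \<or> (i, a) \<in> p" using ptotal[of a i] iA i by auto
    then show ?thesis using xy i \<open>a \<in> A - I\<close> by (auto simp: Q_cases)
  next
    fix a assume xy: "x = None" "y = Some a"
    then have "a \<in> A - I" using h unfolding amalg_alph_def by auto
    then have "(a, i) \<in> p \<or> (i, a) \<in> p" using ptotal[of a i] iA i by auto
    then show ?thesis using xy i \<open>a \<in> A - I\<close> by (auto simp: Q_cases)
  qed (use h in auto)
qed

definition g :: "letter \<Rightarrow> letter option" where "g a = (if a \<in> I then None else Some a)"

lemma g_alph: "a \<in> A \<Longrightarrow> g a \<in> amalg_alph A I"
  unfolding g_def amalg_alph_def by auto

lemma transfer:
  assumes "a \<in> A" "b \<in> A" "((a, b) \<in> p \<and> a \<noteq> b) \<or> (a = b \<and> is_X a)"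
  shows "((g a, g b) \<in> Q \<and> g a \<noteq> g b) \<or> (g a = g b \<and> amalg_strict (g a))"
  using assms unfolding g_def by (auto simp: Q_cases)

end




lemma phi_sum_eq:
  fixes S :: "'a set" and r :: "'a \<Rightarrow> 'a \<Rightarrow> bool" and st :: "'a \<Rightarrow> bool" and P :: "'a rel"
  assumes fin: "finite S" and irr: "\<forall>a\<in>S. \<not> r a a"
    and tr: "\<forall>a\<in>S. \<forall>b\<in>S. \<forall>c\<in>S. r a b \<longrightarrow> r b c \<longrightarrow> r a c"
    and tot: "\<forall>a\<in>S. \<forall>b\<in>S. a \<noteq> b \<longrightarrow> r a b \<or> r b a"
    and bp: "\<forall>a\<in>S. \<forall>b\<in>S. bump_of P st a b = (r a b \<or> (a = b \<and> \<not> st a))"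
    and w: "set w \<subseteq> S"
  shows "\<exists>f s. phi P st w = map length (rsk (ltS s) (map f w)) \<and>
     (\<forall>a\<in>S. \<forall>b\<in>S. leS s (f a) (f b) = (r a b \<or> (a = b \<and> st a)))"
proof -
  obtain f s where fs: "\<forall>a\<in>S. \<forall>b\<in>S. (ltS s (f a) (f b) = (r a b \<or> (a = b \<and> \<not> st a))) \<and>
                              (leS s (f a) (f b) = (r a b \<or> (a = b \<and> st a)))"
    using embed[OF fin irr tr tot, of st] by blast
  have "\<forall>a\<in>S. \<forall>b\<in>S. bump_of P st a b = ltS s (f a) (f b)" using fs bp by auto
  from rsk_map[where S=S and bump="bump_of P st" and bump'="ltS s" and f=f, OF this w]
  have "rsk (ltS s) (map f w) = map (map f) (rsk (bump_of P st) w)" by blast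
  then have "phi P st w = map length (rsk (ltS s) (map f w))" by (simp add: phi_def comp_def)
  then show ?thesis using fs by blast
qed

theorem lemma2:
  fixes Gset :: "real set" and p :: "letter rel" and I :: "letter set"
    and w :: "letter list" and k :: nat
  assumes "real_interval Gset"
    and "admissible Gset p"
    and "interval_wrt (alph Gset) p I"
    and "I \<noteq> {}"
    and "set w \<subseteq> alph Gset"
    and "1 \<le> k"
  shows "(\<Sum>i=1..k. lam (phi p is_X w) i)
         \<le> (\<Sum>i=1..k. lam (phi (amalg_order (alph Gset) p I) amalg_strict (amalg_word I w)) i)"
proof -
  define A where "A = alph Gset"
  have lin: "linear_order_on A p" using assms(2) unfolding admissible_def A_def by blast
  interpret amsetup A p I using lin assms(3,4) unfolding A_def by unfold_locales auto
  have wA: "set w \<subseteq> A" using assms(5) A_def by simp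
  define S where "S = set w"
  define r where "r a b = ((a, b) \<in> p \<and> a \<noteq> b)" for a b
  have bp: "\<forall>a\<in>S. \<forall>b\<in>S. bump_of p is_X a b = (r a b \<or> (a = b \<and> \<not> is_X a))"
    using wA prefl unfolding S_def r_def bump_of_def by auto
  have fS: "finite S" unfolding S_def by simp
  have SA: "S \<subseteq> A" using wA S_def by simp
  have irr: "\<forall>a\<in>S. \<not> r a a" unfolding r_def by simp
  have tr: "\<forall>a\<in>S. \<forall>b\<in>S. \<forall>c\<in>S. r a b \<longrightarrow> r b c \<longrightarrow> r a c"
    unfolding r_def using ptrans pantisym by blast
  have tot: "\<forall>a\<in>S. \<forall>b\<in>S. a \<noteq> b \<longrightarrow> r a b \<or> r b a"
    unfolding r_def using ptotal SA by blast
  obtain f s where F: "phi p is_X w = map length (rsk (ltS s) (map f w))"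
     "\<forall>a\<in>S. \<forall>b\<in>S. leS s (f a) (f b) = (r a b \<or> (a = b \<and> is_X a))"
    using phi_sum_eq[OF fS irr tr tot bp, of w] S_def by auto
  define w' where "w' = amalg_word I w"
  have w'g: "w' = map g w" unfolding w'_def amalg_word_def g_def by simp
  define S' where "S' = set w'"
  have S'A: "S' \<subseteq> amalg_alph A I" unfolding S'_def w'g using wA g_alph by auto
  define r' where "r' a b = ((a, b) \<in> Q \<and> a \<noteq> b)" for a b
  have fS': "finite S'" unfolding S'_def by simp
  have irr': "\<forall>a\<in>S'. \<not> r' a a" unfolding r'_def by simp
  have tr': "\<forall>a\<in>S'. \<forall>b\<in>S'. \<forall>c\<in>S'. r' a b \<longrightarrow> r' b c \<longrightarrow> r' a c"
    unfolding r'_def using Qtrans by blast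
  have tot': "\<forall>a\<in>S'. \<forall>b\<in>S'. a \<noteq> b \<longrightarrow> r' a b \<or> r' b a"
    unfolding r'_def using Qtotal S'A by blast
  have bp': "\<forall>a\<in>S'. \<forall>b\<in>S'. bump_of Q amalg_strict a b = (r' a b \<or> (a = b \<and> \<not> amalg_strict a))"
    using S'A Qrefl unfolding r'_def bump_of_def by auto
  obtain f' s' where F': "phi Q amalg_strict w' = map length (rsk (ltS s') (map f' w'))"
     "\<forall>a\<in>S'. \<forall>b\<in>S'. leS s' (f' a) (f' b) = (r' a b \<or> (a = b \<and> amalg_strict a))"
    using phi_sum_eq[OF fS' irr' tr' tot' bp', of w'] S'_def by auto
  have ch: "\<forall>i j. i < j \<longrightarrow> j < length (map f w) \<longrightarrow> leS s (map f w ! i) (map f w ! j) \<longrightarrow>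
      leS s' (map f' w' ! i) (map f' w' ! j)"
  proof (intro allI impI)
    fix i j assume ij: "i < j" "j < length (map f w)" and le: "leS s (map f w ! i) (map f w ! j)"
    have iS: "w ! i \<in> S" "w ! j \<in> S" using ij unfolding S_def by auto
    have "r (w!i) (w!j) \<or> (w!i = w!j \<and> is_X (w!i))" using le F(2) iS ij by auto
    then have "r' (g (w!i)) (g (w!j)) \<or> (g (w!i) = g (w!j) \<and> amalg_strict (g (w!i)))"
      using transfer[of "w!i" "w!j"] iS SA unfolding r_def r'_def by blast
    moreover have "g (w!i) \<in> S'" "g (w!j) \<in> S'" using ij unfolding S'_def w'g by auto
    ultimately show "leS s' (map f' w' ! i) (map f' w' ! j)" using F'(2) ij w'g by auto
  qed
  have "sum_list (take k (map length (rsk (ltS s) (map f w)))) \<le> sum_list (take k (map length (rsk (ltS s') (map f' w'))))"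
    by (rule greene_mono[OF _ ch]) (simp add: w'g)
  then show ?thesis unfolding sum_lam F(1) F'(1)[unfolded w'_def A_def] using w'_def A_def by simp
qed


end
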